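(* Let $X\colon\mathcal K\leftarrow\mathcal H$ and $Y\colon\mathcal H\leftarrow\mathcal G$ be groupoid correspondences, and let $U\subseteq X$ and $V\subseteq Y$ be slices. Then $U\cdot V=\{[x,y]:x\in U,y\in V,s(x)=r(y)\}\subseteq X\circ_{\mathcal H}Y$ is a slice of $X\circ_{\mathcal H}Y$, and for each $z\in U\cdot V$ the elements $x\in U$, $y\in V$ with $z=[x,y]$ are unique.
   Context: Groupoids are étale ($r,s$ local homeomorphisms, continuous multiplication and inversion) with Hausdorff locally compact object space. A groupoid correspondence $X\colon\mathcal H\leftarrow\mathcal G$: space with commuting continuous left $\mathcal H$-action (anchor $r$) and right $\mathcal G$-action (anchor $s$), $s$ a local homeomorphism, right action free and proper. $X\circ_{\mathcal H}Y$ is the orbit space of $X\times_{s,\mathcal H^0,r}Y$ under $h\cdot(x,y)=(xh^{-1},hy)$, elements $[x,y]$, a groupoid correspondence $\mathcal K\leftarrow\mathcal G$ with $k[x,y]=[kx,y]$, $[x,y]g=[x,yg]$, $s[x,y]=s(y)$. A slice of a correspondence $X\colon\mathcal H\leftarrow\mathcal G$ is an open subset on which both $s\colon X\to\mathcal G^0$ and the orbit projection $X\to X/\mathcal G$ are injective. *)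

theory Defs
  imports "HOL-Analysis.Analysis"
begin

definition local_homeo :: "'a topology \<Rightarrow> 'b topology \<Rightarrow> ('a \<Rightarrow> 'b) \<Rightarrow> bool" where
  "local_homeo X Y f \<longleftrightarrow> continuous_map X Y f \<and>
     (\<forall>x \<in> topspace X. \<exists>U. openin X U \<and> x \<in> U \<and> openin Y (f ` U) \<and>
        homeomorphic_map (subtopology X U) (subtopology Y (f ` U)) f)"

definition quot_top :: "'a topology \<Rightarrow> ('a \<Rightarrow> 'b) \<Rightarrow> 'b topology" where
  "quot_top T f = topology (\<lambda>U. U \<subseteq> f ` topspace T \<and> openin T {x \<in> topspace T. f x \<in> U})"

text \<open>A groupoid is given by its arrow space (the topspace of gtop); the object
  space is identified with the set of units, i.e. the image of the range map.\<close>
record 'g grpd =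
  gtop :: "'g topology"
  rng  :: "'g \<Rightarrow> 'g"
  src  :: "'g \<Rightarrow> 'g"
  mult :: "'g \<Rightarrow> 'g \<Rightarrow> 'g"
  ginv :: "'g \<Rightarrow> 'g"

definition arr :: "('g, 'z) grpd_scheme \<Rightarrow> 'g set" where
  "arr G = topspace (gtop G)"

definition units :: "('g, 'z) grpd_scheme \<Rightarrow> 'g set" where
  "units G = rng G ` arr G"

definition unit_top :: "('g, 'z) grpd_scheme \<Rightarrow> 'g topology" where
  "unit_top G = subtopology (gtop G) (units G)"

definition composable :: "('g, 'z) grpd_scheme \<Rightarrow> ('g \<times> 'g) set" where
  "composable G = {(g, h). g \<in> arr G \<and> h \<in> arr G \<and> src G g = rng G h}"

definition etale_groupoid :: "('g, 'z) grpd_scheme \<Rightarrow> bool" where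
  "etale_groupoid G \<longleftrightarrow>
     (\<forall>g \<in> arr G. rng G g \<in> arr G \<and> src G g \<in> arr G \<and>
        rng G (rng G g) = rng G g \<and> src G (rng G g) = rng G g \<and>
        rng G (src G g) = src G g \<and> src G (src G g) = src G g) \<and>
     (\<forall>(g, h) \<in> composable G. mult G g h \<in> arr G \<and>
        rng G (mult G g h) = rng G g \<and> src G (mult G g h) = src G h) \<and>
     (\<forall>g h k. g \<in> arr G \<and> h \<in> arr G \<and> k \<in> arr G \<and> src G g = rng G h \<and> src G h = rng G k
        \<longrightarrow> mult G (mult G g h) k = mult G g (mult G h k)) \<and>
     (\<forall>g \<in> arr G. mult G (rng G g) g = g \<and> mult G g (src G g) = g) \<and>
     (\<forall>g \<in> arr G. ginv G g \<in> arr G \<and> rng G (ginv G g) = src G g \<and> src G (ginv G g) = rng G g \<and>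
        mult G g (ginv G g) = rng G g \<and> mult G (ginv G g) g = src G g) \<and>
     local_homeo (gtop G) (unit_top G) (rng G) \<and>
     local_homeo (gtop G) (unit_top G) (src G) \<and>
     continuous_map (subtopology (prod_topology (gtop G) (gtop G)) (composable G)) (gtop G)
        (\<lambda>(g, h). mult G g h) \<and>
     continuous_map (gtop G) (gtop G) (ginv G) \<and>
     Hausdorff_space (unit_top G) \<and> locally_compact_space (unit_top G)"

text \<open>A correspondence \<open>X : H \<leftarrow> G\<close>: space \<open>ctop\<close>, left \<open>H\<close>-action \<open>lact\<close> with anchor \<open>cr\<close>,
  right \<open>G\<close>-action \<open>ract\<close> with anchor \<open>cs\<close>.\<close>
record ('x, 'h, 'g) corr =
  ctop :: "'x topology"
  cr   :: "'x \<Rightarrow> 'h"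
  cs   :: "'x \<Rightarrow> 'g"
  lact :: "'h \<Rightarrow> 'x \<Rightarrow> 'x"
  ract :: "'x \<Rightarrow> 'g \<Rightarrow> 'x"

definition pts :: "('x, 'h, 'g) corr \<Rightarrow> 'x set" where
  "pts X = topspace (ctop X)"

definition is_corr :: "'h grpd \<Rightarrow> 'g grpd \<Rightarrow> ('x, 'h, 'g) corr \<Rightarrow> bool" where
  "is_corr H G X \<longleftrightarrow>
     continuous_map (ctop X) (unit_top H) (cr X) \<and>
     local_homeo (ctop X) (unit_top G) (cs X) \<and>
     \<comment> \<open>left action\<close>
     (\<forall>h x. h \<in> arr H \<and> x \<in> pts X \<and> src H h = cr X x \<longrightarrow>
        lact X h x \<in> pts X \<and> cr X (lact X h x) = rng H h \<and> cs X (lact X h x) = cs X x) \<and>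
     (\<forall>x \<in> pts X. lact X (cr X x) x = x) \<and>
     (\<forall>h1 h2 x. h1 \<in> arr H \<and> h2 \<in> arr H \<and> x \<in> pts X \<and> src H h1 = rng H h2 \<and> src H h2 = cr X x
        \<longrightarrow> lact X h1 (lact X h2 x) = lact X (mult H h1 h2) x) \<and>
     continuous_map
        (subtopology (prod_topology (gtop H) (ctop X)) {(h, x). h \<in> arr H \<and> x \<in> pts X \<and> src H h = cr X x})
        (ctop X) (\<lambda>(h, x). lact X h x) \<and>
     \<comment> \<open>right action\<close>
     (\<forall>x g. x \<in> pts X \<and> g \<in> arr G \<and> cs X x = rng G g \<longrightarrow>
        ract X x g \<in> pts X \<and> cs X (ract X x g) = src G g \<and> cr X (ract X x g) = cr X x) \<and>
     (\<forall>x \<in> pts X. ract X x (cs X x) = x) \<and>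
     (\<forall>x g1 g2. x \<in> pts X \<and> g1 \<in> arr G \<and> g2 \<in> arr G \<and> cs X x = rng G g1 \<and> src G g1 = rng G g2
        \<longrightarrow> ract X (ract X x g1) g2 = ract X x (mult G g1 g2)) \<and>
     continuous_map
        (subtopology (prod_topology (ctop X) (gtop G)) {(x, g). x \<in> pts X \<and> g \<in> arr G \<and> cs X x = rng G g})
        (ctop X) (\<lambda>(x, g). ract X x g) \<and>
     \<comment> \<open>the actions commute\<close>
     (\<forall>h x g. h \<in> arr H \<and> x \<in> pts X \<and> g \<in> arr G \<and> src H h = cr X x \<and> cs X x = rng G g
        \<longrightarrow> lact X h (ract X x g) = ract X (lact X h x) g) \<and>
     \<comment> \<open>the right action is free and proper\<close>
     (\<forall>x g. x \<in> pts X \<and> g \<in> arr G \<and> cs X x = rng G g \<and> ract X x g = x \<longrightarrow> g = cs X x) \<and>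
     proper_map
        (subtopology (prod_topology (ctop X) (gtop G)) {(x, g). x \<in> pts X \<and> g \<in> arr G \<and> cs X x = rng G g})
        (prod_topology (ctop X) (ctop X)) (\<lambda>(x, g). (x, ract X x g))"

text \<open>Orbit of a point under the right action (the orbit projection \<open>X \<rightarrow> X/G\<close>).\<close>
definition orbit_r :: "'g grpd \<Rightarrow> ('x, 'h, 'g) corr \<Rightarrow> 'x \<Rightarrow> 'x set" where
  "orbit_r G X x = {ract X x g | g. g \<in> arr G \<and> rng G g = cs X x}"

definition slice :: "'g grpd \<Rightarrow> ('x, 'h, 'g) corr \<Rightarrow> 'x set \<Rightarrow> bool" where
  "slice G X U \<longleftrightarrow> openin (ctop X) U \<and> inj_on (cs X) U \<and> inj_on (orbit_r G X) U"

definition fib_prod :: "('x, 'k, 'h) corr \<Rightarrow> ('y, 'h, 'g) corr \<Rightarrow> ('x \<times> 'y) set" where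
  "fib_prod X Y = {(x, y). x \<in> pts X \<and> y \<in> pts Y \<and> cs X x = cr Y y}"

text \<open>The class \<open>[x,y]\<close>: the \<open>H\<close>-orbit of \<open>(x,y)\<close> under \<open>h\<cdot>(x,y) = (x h\<^sup>-\<^sup>1, h y)\<close>.\<close>
definition cls :: "'h grpd \<Rightarrow> ('x, 'k, 'h) corr \<Rightarrow> ('y, 'h, 'g) corr \<Rightarrow> 'x \<Rightarrow> 'y \<Rightarrow> ('x \<times> 'y) set" where
  "cls H X Y x y = {(ract X x (ginv H h), lact Y h y) | h. h \<in> arr H \<and> src H h = cs X x}"

definition rep :: "('x \<times> 'y) set \<Rightarrow> 'x \<times> 'y" where
  "rep z = (SOME p. p \<in> z)"

text \<open>The composite correspondence \<open>X \<circ>\<^sub>H Y : K \<leftarrow> G\<close> (orbit space with quotient topology;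
  anchors and actions computed on representatives).\<close>
definition comp_corr :: "'h grpd \<Rightarrow> ('x, 'k, 'h) corr \<Rightarrow> ('y, 'h, 'g) corr \<Rightarrow> (('x \<times> 'y) set, 'k, 'g) corr" where
  "comp_corr H X Y =
     \<lparr> ctop = quot_top (subtopology (prod_topology (ctop X) (ctop Y)) (fib_prod X Y)) (\<lambda>(x, y). cls H X Y x y),
       cr = (\<lambda>z. cr X (fst (rep z))),
       cs = (\<lambda>z. cs Y (snd (rep z))),
       lact = (\<lambda>k z. cls H X Y (lact X k (fst (rep z))) (snd (rep z))),
       ract = (\<lambda>z g. cls H X Y (fst (rep z)) (ract Y (snd (rep z)) g)) \<rparr>"

definition slice_prod :: "'h grpd \<Rightarrow> ('x, 'k, 'h) corr \<Rightarrow> ('y, 'h, 'g) corr \<Rightarrow> 'x set \<Rightarrow> 'y set \<Rightarrow> ('x \<times> 'y) set set" where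
  "slice_prod H X Y U V = {cls H X Y x y | x y. x \<in> U \<and> y \<in> V \<and> cs X x = cr Y y}"

end

theory Submission
  imports Defs
begin

context fixes G :: "('g,'z) grpd_scheme" assumes eg: "etale_groupoid G" begin

lemma gr_basic[simp]:
  "g \<in> arr G \<Longrightarrow> rng G g \<in> arr G"
  "g \<in> arr G \<Longrightarrow> src G g \<in> arr G"
  "g \<in> arr G \<Longrightarrow> rng G (rng G g) = rng G g"
  "g \<in> arr G \<Longrightarrow> src G (rng G g) = rng G g"
  "g \<in> arr G \<Longrightarrow> rng G (src G g) = src G g"
  "g \<in> arr G \<Longrightarrow> src G (src G g) = src G g"
  using eg unfolding etale_groupoid_def by blast+

lemma gr_mult[simp]:
  "g \<in> arr G \<Longrightarrow> h \<in> arr G \<Longrightarrow> src G g = rng G h \<Longrightarrow> mult G g h \<in> arr G"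
  "g \<in> arr G \<Longrightarrow> h \<in> arr G \<Longrightarrow> src G g = rng G h \<Longrightarrow> rng G (mult G g h) = rng G g"
  "g \<in> arr G \<Longrightarrow> h \<in> arr G \<Longrightarrow> src G g = rng G h \<Longrightarrow> src G (mult G g h) = src G h"
  using eg unfolding etale_groupoid_def composable_def by auto

lemma gr_assoc:
  "g \<in> arr G \<Longrightarrow> h \<in> arr G \<Longrightarrow> k \<in> arr G \<Longrightarrow> src G g = rng G h \<Longrightarrow> src G h = rng G k
   \<Longrightarrow> mult G (mult G g h) k = mult G g (mult G h k)"
  using eg unfolding etale_groupoid_def by blast

lemma gr_unit[simp]:
  "g \<in> arr G \<Longrightarrow> mult G (rng G g) g = g"
  "g \<in> arr G \<Longrightarrow> mult G g (src G g) = g"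
  using eg unfolding etale_groupoid_def by blast+

lemma gr_inv[simp]:
  "g \<in> arr G \<Longrightarrow> ginv G g \<in> arr G"
  "g \<in> arr G \<Longrightarrow> rng G (ginv G g) = src G g"
  "g \<in> arr G \<Longrightarrow> src G (ginv G g) = rng G g"
  "g \<in> arr G \<Longrightarrow> mult G g (ginv G g) = rng G g"
  "g \<in> arr G \<Longrightarrow> mult G (ginv G g) g = src G g"
  using eg unfolding etale_groupoid_def by blast+

lemmas egu = eg[unfolded etale_groupoid_def]
lemma gr_lh_rng: "local_homeo (gtop G) (unit_top G) (rng G)"
  by (rule egu[THEN conjunct2, THEN conjunct2, THEN conjunct2, THEN conjunct2, THEN conjunct2, THEN conjunct1])
lemma gr_inv_cont: "continuous_map (gtop G) (gtop G) (ginv G)"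
  by (rule egu[THEN conjunct2, THEN conjunct2, THEN conjunct2, THEN conjunct2, THEN conjunct2, THEN conjunct2,
     THEN conjunct2, THEN conjunct2, THEN conjunct1])

lemma gr_inv_unique:
  assumes "k \<in> arr G" "m \<in> arr G" "src G k = rng G m" "mult G k m = src G m"
  shows "k = ginv G m"
proof -
  have "k = mult G k (rng G m)" using assms by (metis gr_unit(2))
  also have "\<dots> = mult G k (mult G m (ginv G m))" using assms by simp
  also have "\<dots> = mult G (mult G k m) (ginv G m)" using assms gr_assoc[of k m "ginv G m"] by simp
  also have "\<dots> = ginv G m" using assms by (metis gr_inv(1,2) gr_unit(1))
  finally show ?thesis .
qed

lemma gr_inv_inv[simp]: "g \<in> arr G \<Longrightarrow> ginv G (ginv G g) = g"
  by (metis gr_inv gr_inv_unique)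

lemma gr_inv_unit: "u \<in> arr G \<Longrightarrow> rng G u = u \<Longrightarrow> ginv G u = u"
  by (metis gr_basic(4) gr_inv(2,4) gr_inv_unique gr_unit(1) gr_inv(1))

lemma gr_inv_mult:
  assumes "g \<in> arr G" "h \<in> arr G" "src G g = rng G h"
  shows "ginv G (mult G g h) = mult G (ginv G h) (ginv G g)"
proof -
  have "mult G (mult G (ginv G h) (ginv G g)) (mult G g h)
      = mult G (ginv G h) (mult G (ginv G g) (mult G g h))"
    using assms by (simp add: gr_assoc)
  also have "\<dots> = mult G (ginv G h) (mult G (mult G (ginv G g) g) h)"
    using assms gr_assoc[of "ginv G g" g h] by simp
  also have "\<dots> = src G h" using assms by (metis gr_inv(5) gr_unit(1) gr_inv(1,3))
  finally have e: "mult G (mult G (ginv G h) (ginv G g)) (mult G g h) = src G (mult G g h)"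
    using assms by simp
  show ?thesis using gr_inv_unique[OF _ _ _ e] assms by simp
qed

end

context fixes H :: "'h grpd" and G :: "'g grpd" and X :: "('x,'h,'g) corr"
  assumes eH: "etale_groupoid H" and eG: "etale_groupoid G" and cX: "is_corr H G X"
begin

lemmas cXu = cX[unfolded is_corr_def]
lemmas c1 = cXu[THEN conjunct1]
lemmas c2 = cXu[THEN conjunct2, THEN conjunct1]
lemmas c3 = cXu[THEN conjunct2, THEN conjunct2, THEN conjunct1]
lemmas c4 = cXu[THEN conjunct2, THEN conjunct2, THEN conjunct2, THEN conjunct1]
lemmas c5 = cXu[THEN conjunct2, THEN conjunct2, THEN conjunct2, THEN conjunct2, THEN conjunct1]
lemmas c6 = cXu[THEN conjunct2, THEN conjunct2, THEN conjunct2, THEN conjunct2, THEN conjunct2, THEN conjunct1]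
lemmas c7 = cXu[THEN conjunct2, THEN conjunct2, THEN conjunct2, THEN conjunct2, THEN conjunct2, THEN conjunct2, THEN conjunct1]
lemmas c8 = cXu[THEN conjunct2, THEN conjunct2, THEN conjunct2, THEN conjunct2, THEN conjunct2, THEN conjunct2, THEN conjunct2, THEN conjunct1]
lemmas c9 = cXu[THEN conjunct2, THEN conjunct2, THEN conjunct2, THEN conjunct2, THEN conjunct2, THEN conjunct2, THEN conjunct2, THEN conjunct2, THEN conjunct1]
lemmas c10 = cXu[THEN conjunct2, THEN conjunct2, THEN conjunct2, THEN conjunct2, THEN conjunct2, THEN conjunct2, THEN conjunct2, THEN conjunct2, THEN conjunct2, THEN conjunct1]
lemmas c11 = cXu[THEN conjunct2, THEN conjunct2, THEN conjunct2, THEN conjunct2, THEN conjunct2, THEN conjunct2, THEN conjunct2, THEN conjunct2, THEN conjunct2, THEN conjunct2, THEN conjunct1]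
lemmas c12 = cXu[THEN conjunct2, THEN conjunct2, THEN conjunct2, THEN conjunct2, THEN conjunct2, THEN conjunct2, THEN conjunct2, THEN conjunct2, THEN conjunct2, THEN conjunct2, THEN conjunct2, THEN conjunct1]

lemma co_cr[simp]:
  assumes "x \<in> pts X" shows "cr X x \<in> arr H" "rng H (cr X x) = cr X x" "src H (cr X x) = cr X x"
proof -
  have "cr X x \<in> topspace (unit_top H)"
    using continuous_map_image_subset_topspace[OF c1] assms unfolding pts_def by blast
  then obtain g where g: "g \<in> arr H" "cr X x = rng H g"
    unfolding unit_top_def units_def arr_def by auto
  show "cr X x \<in> arr H" "rng H (cr X x) = cr X x" "src H (cr X x) = cr X x"
    using g gr_basic[OF eH] by auto
qed

lemma co_cs[simp]:
  assumes "x \<in> pts X" shows "cs X x \<in> arr G" "rng G (cs X x) = cs X x" "src G (cs X x) = cs X x"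
proof -
  have "cs X x \<in> topspace (unit_top G)"
    using continuous_map_image_subset_topspace[of "ctop X" "unit_top G" "cs X"] c2 assms unfolding pts_def local_homeo_def by blast
  then obtain g where g: "g \<in> arr G" "cs X x = rng G g"
    unfolding unit_top_def units_def arr_def by auto
  show "cs X x \<in> arr G" "rng G (cs X x) = cs X x" "src G (cs X x) = cs X x"
    using g gr_basic[OF eG] by auto
qed

lemma co_lact[simp]:
  "h \<in> arr H \<Longrightarrow> x \<in> pts X \<Longrightarrow> src H h = cr X x \<Longrightarrow> lact X h x \<in> pts X"
  "h \<in> arr H \<Longrightarrow> x \<in> pts X \<Longrightarrow> src H h = cr X x \<Longrightarrow> cr X (lact X h x) = rng H h"
  "h \<in> arr H \<Longrightarrow> x \<in> pts X \<Longrightarrow> src H h = cr X x \<Longrightarrow> cs X (lact X h x) = cs X x"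
  using c3 by blast+

lemma co_lact_unit[simp]: "x \<in> pts X \<Longrightarrow> lact X (cr X x) x = x"
  using c4 by blast

lemma co_lact_assoc:
  "h1 \<in> arr H \<Longrightarrow> h2 \<in> arr H \<Longrightarrow> x \<in> pts X \<Longrightarrow> src H h1 = rng H h2 \<Longrightarrow> src H h2 = cr X x
   \<Longrightarrow> lact X h1 (lact X h2 x) = lact X (mult H h1 h2) x"
  using c5 by blast

lemma co_ract[simp]:
  "x \<in> pts X \<Longrightarrow> g \<in> arr G \<Longrightarrow> cs X x = rng G g \<Longrightarrow> ract X x g \<in> pts X"
  "x \<in> pts X \<Longrightarrow> g \<in> arr G \<Longrightarrow> cs X x = rng G g \<Longrightarrow> cs X (ract X x g) = src G g"
  "x \<in> pts X \<Longrightarrow> g \<in> arr G \<Longrightarrow> cs X x = rng G g \<Longrightarrow> cr X (ract X x g) = cr X x"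
  using c7 by blast+

lemma co_ract_unit[simp]: "x \<in> pts X \<Longrightarrow> ract X x (cs X x) = x"
  using c8 by blast

lemma co_ract_assoc:
  "x \<in> pts X \<Longrightarrow> g1 \<in> arr G \<Longrightarrow> g2 \<in> arr G \<Longrightarrow> cs X x = rng G g1 \<Longrightarrow> src G g1 = rng G g2
   \<Longrightarrow> ract X (ract X x g1) g2 = ract X x (mult G g1 g2)"
  using c9 by blast

lemma co_free:
  "x \<in> pts X \<Longrightarrow> g \<in> arr G \<Longrightarrow> cs X x = rng G g \<Longrightarrow> ract X x g = x \<Longrightarrow> g = cs X x"
  using c12 by blast

lemma co_comm:
  "h \<in> arr H \<Longrightarrow> x \<in> pts X \<Longrightarrow> g \<in> arr G \<Longrightarrow> src H h = cr X x \<Longrightarrow> cs X x = rng G g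
   \<Longrightarrow> lact X h (ract X x g) = ract X (lact X h x) g"
  using c11 by blast

lemma co_lact_inv[simp]:
  assumes "h \<in> arr H" "x \<in> pts X" "src H h = cr X x"
  shows "lact X (ginv H h) (lact X h x) = x"
  using assms co_lact_assoc[of "ginv H h" h x] gr_inv[OF eH] by simp

lemma co_ract_inv[simp]:
  assumes "g \<in> arr G" "x \<in> pts X" "cs X x = rng G g"
  shows "ract X (ract X x g) (ginv G g) = x"
  using assms co_ract_assoc[of x g "ginv G g"] gr_inv[OF eG] co_ract_unit[of x] by simp

lemma co_orbit:
  assumes x: "x \<in> pts X" and g: "g \<in> arr G" "cs X x = rng G g"
  shows "orbit_r G X (ract X x g) = orbit_r G X x"
proof
  show "orbit_r G X (ract X x g) \<subseteq> orbit_r G X x"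
  proof
    fix z assume "z \<in> orbit_r G X (ract X x g)"
    then obtain g' where g': "g' \<in> arr G" "rng G g' = src G g" "z = ract X (ract X x g) g'"
      unfolding orbit_r_def using x g by auto
    then have "z = ract X x (mult G g g')" using co_ract_assoc x g by simp
    moreover have "mult G g g' \<in> arr G" "rng G (mult G g g') = cs X x"
      using g g' gr_mult[OF eG] by auto
    ultimately show "z \<in> orbit_r G X x" unfolding orbit_r_def by blast
  qed
next
  show "orbit_r G X x \<subseteq> orbit_r G X (ract X x g)"
  proof
    fix z assume "z \<in> orbit_r G X x"
    then obtain g'' where g'': "g'' \<in> arr G" "rng G g'' = cs X x" "z = ract X x g''"
      unfolding orbit_r_def by auto
    define g' where "g' = mult G (ginv G g) g''"
    have a: "g' \<in> arr G" "rng G g' = cs X (ract X x g)"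
      unfolding g'_def using g g'' x gr_mult[OF eG] gr_inv[OF eG] by auto
    have "ract X (ract X x g) g' = ract X x (mult G g g')"
      using co_ract_assoc x g a by simp
    also have "mult G g g' = g''"
      unfolding g'_def using g g'' gr_inv[OF eG] gr_assoc[OF eG, of g "ginv G g" g'']
      by (metis gr_unit(1)[OF eG])
    finally have "z = ract X (ract X x g) g'" using g'' by simp
    then show "z \<in> orbit_r G X (ract X x g)" unfolding orbit_r_def using a by blast
  qed
qed

end

context fixes K :: "'k grpd" and H :: "'h grpd" and G :: "'g grpd"
  and X :: "('x,'k,'h) corr" and Y :: "('y,'h,'g) corr"
  assumes eK: "etale_groupoid K" and eH: "etale_groupoid H" and eG: "etale_groupoid G"
  and cX: "is_corr K H X" and cY: "is_corr H G Y"
begin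

lemmas Hs[simp] = gr_basic[OF eH] gr_mult[OF eH] gr_unit[OF eH] gr_inv[OF eH] gr_inv_inv[OF eH]
lemmas Xs[simp] = co_cr[OF eK eH cX] co_cs[OF eK eH cX] co_ract[OF eK eH cX] co_ract_unit[OF eK eH cX]
lemmas Ys[simp] = co_cr[OF eH eG cY] co_cs[OF eH eG cY] co_lact[OF eH eG cY] co_lact_unit[OF eH eG cY]
   co_ract[OF eH eG cY] co_ract_unit[OF eH eG cY]

lemma fibD: "(x, y) \<in> fib_prod X Y \<longleftrightarrow> x \<in> pts X \<and> y \<in> pts Y \<and> cs X x = cr Y y"
  unfolding fib_prod_def by simp

lemma cls_refl:
  assumes "(x, y) \<in> fib_prod X Y" shows "(x, y) \<in> cls H X Y x y"
proof -
  have x: "x \<in> pts X" "y \<in> pts Y" "cs X x = cr Y y" using assms fibD by auto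
  have "ginv H (cs X x) = cs X x" using x gr_inv_unit[OF eH] by simp
  then have "ract X x (ginv H (cs X x)) = x" using x co_ract_unit[OF eK eH cX, of x] by simp
  moreover have "lact Y (cs X x) y = y" using x by simp
  moreover have "cs X x \<in> arr H \<and> src H (cs X x) = cs X x" using x by simp
  ultimately show ?thesis unfolding cls_def mem_Collect_eq
    by (intro exI[of _ "cs X x"]) simp
qed

lemma cls_step:
  assumes x: "x \<in> pts X" "y \<in> pts Y" "cs X x = cr Y y"
    and h: "h \<in> arr H" "src H h = cs X x" and g: "g \<in> arr H" "src H g = rng H h"
  shows "ract X (ract X x (ginv H h)) (ginv H g) = ract X x (ginv H (mult H g h))"
    "lact Y g (lact Y h y) = lact Y (mult H g h) y"
  using x h g co_ract_assoc[OF eK eH cX, of x "ginv H h" "ginv H g"] gr_inv_mult[OF eH, of g h]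
    co_lact_assoc[OF eH eG cY, of g h y] by auto

lemma cls_mem:
  assumes xy: "(x, y) \<in> fib_prod X Y" and ab: "(a, b) \<in> cls H X Y x y"
  shows "(a, b) \<in> fib_prod X Y" "cls H X Y a b = cls H X Y x y" "cs Y b = cs Y y"
proof -
  have x: "x \<in> pts X" "y \<in> pts Y" "cs X x = cr Y y" using xy fibD by auto
  obtain h where h: "h \<in> arr H" "src H h = cs X x" "a = ract X x (ginv H h)" "b = lact Y h y"
    using ab unfolding cls_def by auto
  show "(a, b) \<in> fib_prod X Y" using x h unfolding fib_prod_def by auto
  show "cs Y b = cs Y y" using x h by auto
  have csa: "cs X a = rng H h" using x h by auto
  show "cls H X Y a b = cls H X Y x y"
  proof
    show "cls H X Y a b \<subseteq> cls H X Y x y"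
    proof
      fix p assume "p \<in> cls H X Y a b"
      then obtain g where g: "g \<in> arr H" "src H g = rng H h" "p = (ract X a (ginv H g), lact Y g b)"
        unfolding cls_def csa by auto
      have "p = (ract X x (ginv H (mult H g h)), lact Y (mult H g h) y)"
        using cls_step[OF x h(1,2) g(1,2)] g h by simp
      moreover have "mult H g h \<in> arr H" "src H (mult H g h) = cs X x" using g h by auto
      ultimately show "p \<in> cls H X Y x y" unfolding cls_def by blast
    qed
  next
    show "cls H X Y x y \<subseteq> cls H X Y a b"
    proof
      fix p assume "p \<in> cls H X Y x y"
      then obtain m where m: "m \<in> arr H" "src H m = cs X x" "p = (ract X x (ginv H m), lact Y m y)"
        unfolding cls_def by auto
      define g where "g = mult H m (ginv H h)"
      have g: "g \<in> arr H" "src H g = rng H h" unfolding g_def using m h by auto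
      have "mult H g h = mult H m (mult H (ginv H h) h)"
        unfolding g_def using m h gr_assoc[OF eH, of m "ginv H h" h] by auto
      also have "\<dots> = m" using m h by (metis Hs(6) gr_inv(5)[OF eH] gr_unit(2)[OF eH])
      finally have gh: "mult H g h = m" .
      have "p = (ract X a (ginv H g), lact Y g b)"
        using cls_step[OF x h(1,2) g(1,2)] g h m gh by simp
      then show "p \<in> cls H X Y a b" unfolding cls_def using g csa by auto
    qed
  qed
qed

lemma cls_eq_imp:
  assumes "(x, y) \<in> fib_prod X Y" "(x', y') \<in> fib_prod X Y" "cls H X Y x' y' = cls H X Y x y"
  shows "\<exists>h. h \<in> arr H \<and> src H h = cs X x \<and> x' = ract X x (ginv H h) \<and> y' = lact Y h y"
  using cls_refl[OF assms(2)] assms(3) unfolding cls_def by auto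

lemma rep_mem:
  assumes "(x, y) \<in> fib_prod X Y"
  shows "rep (cls H X Y x y) \<in> cls H X Y x y"
  unfolding rep_def using cls_refl[OF assms] by (rule someI)

lemma slice_uniq:
  assumes U: "inj_on (orbit_r H X) U" and xy: "(x, y) \<in> fib_prod X Y" "x \<in> U"
    and xy': "(x', y') \<in> fib_prod X Y" "x' \<in> U" and e: "cls H X Y x' y' = cls H X Y x y"
  shows "x' = x \<and> y' = y"
proof -
  have x: "x \<in> pts X" "y \<in> pts Y" "cs X x = cr Y y" using xy fibD by auto
  obtain h where h: "h \<in> arr H" "src H h = cs X x" "x' = ract X x (ginv H h)" "y' = lact Y h y"
    using cls_eq_imp[OF xy(1) xy'(1) e] by blast
  have "orbit_r H X x' = orbit_r H X x" using co_orbit[OF eK eH cX, of x "ginv H h"] x h by simp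
  then have xx: "x' = x" using U xy xy' by (meson inj_onD)
  then have "ginv H h = cs X x" using co_free[OF eK eH cX, of x "ginv H h"] x h by simp
  then have "h = cs X x" using gr_inv_inv[OF eH, of h] gr_inv_unit[OF eH, of "cs X x"] x h by simp
  then show ?thesis using xx h x by simp
qed

end

lemma istop_quot: "istopology (\<lambda>W. W \<subseteq> f ` topspace T \<and> openin T {p \<in> topspace T. f p \<in> W})"
  unfolding istopology_def
proof (rule conjI; intro allI impI)
  fix S S' assume a: "S \<subseteq> f ` topspace T \<and> openin T {p \<in> topspace T. f p \<in> S}"
     "S' \<subseteq> f ` topspace T \<and> openin T {p \<in> topspace T. f p \<in> S'}"
  have "{p \<in> topspace T. f p \<in> S \<inter> S'} = {p \<in> topspace T. f p \<in> S} \<inter> {p \<in> topspace T. f p \<in> S'}" by auto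
  then show "S \<inter> S' \<subseteq> f ` topspace T \<and> openin T {p \<in> topspace T. f p \<in> S \<inter> S'}"
    using a by auto
next
  fix KK assume a: "\<forall>K\<in>KK. K \<subseteq> f ` topspace T \<and> openin T {p \<in> topspace T. f p \<in> K}"
  have "{p \<in> topspace T. f p \<in> \<Union>KK} = \<Union>((\<lambda>K. {p \<in> topspace T. f p \<in> K}) ` KK)" by auto
  moreover have "openin T (\<Union>((\<lambda>K. {p \<in> topspace T. f p \<in> K}) ` KK))"
    using a by (intro openin_Union) auto
  ultimately show "\<Union>KK \<subseteq> f ` topspace T \<and> openin T {p \<in> topspace T. f p \<in> \<Union>KK}"
    using a by auto
qed

context fixes K :: "'k grpd" and H :: "'h grpd" and G :: "'g grpd"
  and X :: "('x,'k,'h) corr" and Y :: "('y,'h,'g) corr"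
  assumes eK: "etale_groupoid K" and eH: "etale_groupoid H" and eG: "etale_groupoid G"
  and cX: "is_corr K H X" and cY: "is_corr H G Y"
begin

lemmas Hs'[simp] = gr_basic[OF eH] gr_mult[OF eH] gr_unit[OF eH] gr_inv[OF eH] gr_inv_inv[OF eH]
lemmas Xs'[simp] = co_cr[OF eK eH cX] co_cs[OF eK eH cX] co_ract[OF eK eH cX] co_ract_unit[OF eK eH cX]
lemmas Ys'[simp] = co_cr[OF eH eG cY] co_cs[OF eH eG cY] co_lact[OF eH eG cY] co_lact_unit[OF eH eG cY]
   co_ract[OF eH eG cY] co_ract_unit[OF eH eG cY]

lemma sp_open:
  assumes oU: "openin (ctop X) U" and oV: "openin (ctop Y) V"
  shows "openin (ctop (comp_corr H X Y)) (slice_prod H X Y U V)"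
proof -
  define T where "T = subtopology (prod_topology (ctop X) (ctop Y)) (fib_prod X Y)"
  define f where "f = (\<lambda>(x, y). cls H X Y x y)"
  define S where "S = slice_prod H X Y U V"
  have topT: "topspace T = fib_prod X Y"
    unfolding T_def fib_prod_def pts_def by auto
  have UX: "U \<subseteq> pts X" using openin_subset[OF oU] unfolding pts_def by auto
  have VY: "V \<subseteq> pts Y" using openin_subset[OF oV] unfolding pts_def by auto
  have ct: "ctop (comp_corr H X Y) = topology (\<lambda>W. W \<subseteq> f ` topspace T \<and> openin T {p \<in> topspace T. f p \<in> W})"
    unfolding comp_corr_def quot_top_def T_def f_def by simp
  have SS: "S \<subseteq> f ` topspace T"
  proof
    fix z assume "z \<in> S"
    then obtain x y where "x \<in> U" "y \<in> V" "cs X x = cr Y y" "z = cls H X Y x y"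
      unfolding S_def slice_prod_def by auto
    then show "z \<in> f ` topspace T" unfolding topT f_def fib_prod_def using UX VY
      by (intro image_eqI[of _ _ "(x, y)"]) auto
  qed
  have "openin T {p \<in> topspace T. f p \<in> S}"
  proof (rule iffD2[OF openin_subopen], intro ballI)
    fix p assume "p \<in> {p \<in> topspace T. f p \<in> S}"
    then obtain x' y' where p: "p = (x', y')" "(x', y') \<in> fib_prod X Y" "cls H X Y x' y' \<in> S"
      unfolding topT f_def by (cases p) auto
    then obtain x y where xy: "x \<in> U" "y \<in> V" "cs X x = cr Y y" "cls H X Y x' y' = cls H X Y x y"
      unfolding S_def slice_prod_def by auto
    have fxy: "(x, y) \<in> fib_prod X Y" using xy UX VY by (auto simp: fib_prod_def)
    obtain h where h: "h \<in> arr H" "src H h = cs X x" "x' = ract X x (ginv H h)" "y' = lact Y h y"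
      using cls_eq_imp[OF eK eH eG cX cY fxy p(2) xy(4)] by blast
    have xpts: "x \<in> pts X" "y \<in> pts Y" using fxy by (auto simp: fib_prod_def)
    have hx: "ract X x' h = x" using h xpts co_ract_inv[OF eK eH cX, of "ginv H h" x] by simp
    have hy: "lact Y (ginv H h) y' = y" using h xpts xy co_lact_inv[OF eH eG cY, of h y] by simp
    have csx': "cs X x' = rng H h" using h xpts by simp
    have "local_homeo (gtop H) (unit_top H) (rng H)" by (rule gr_lh_rng[OF eH])
    then obtain B where B: "openin (gtop H) B" "h \<in> B" "openin (unit_top H) (rng H ` B)"
        "homeomorphic_map (subtopology (gtop H) B) (subtopology (unit_top H) (rng H ` B)) (rng H)"
      using h unfolding local_homeo_def arr_def by blast
    then obtain \<sigma> where \<sigma>: "homeomorphic_maps (subtopology (gtop H) B) (subtopology (unit_top H) (rng H ` B)) (rng H) \<sigma>"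
      using homeomorphic_map_maps by blast
    have BH: "B \<subseteq> arr H" using openin_subset[OF B(1)] unfolding arr_def by auto
    have tsB: "topspace (subtopology (unit_top H) (rng H ` B)) = rng H ` B"
      using openin_subset[OF B(3)] by auto
    have \<sigma>c: "continuous_map (subtopology (unit_top H) (rng H ` B)) (subtopology (gtop H) B) \<sigma>"
      using \<sigma> unfolding homeomorphic_maps_def by blast
    have \<sigma>B: "\<And>r. r \<in> rng H ` B \<Longrightarrow> \<sigma> r \<in> B"
      using continuous_map_image_subset_topspace[OF \<sigma>c] tsB by auto
    have \<sigma>r: "\<And>r. r \<in> rng H ` B \<Longrightarrow> rng H (\<sigma> r) = r"
      using \<sigma> tsB unfolding homeomorphic_maps_def by auto
    have "h \<in> topspace (subtopology (gtop H) B)" using B(2) BH unfolding arr_def by auto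
    then have \<sigma>h: "\<sigma> (rng H h) = h"
      using \<sigma> unfolding homeomorphic_maps_def by blast
    define N0 where "N0 = {q \<in> topspace T. cs X (fst q) \<in> rng H ` B}"
    have csc: "continuous_map T (unit_top H) (\<lambda>q. cs X (fst q))"
    proof -
      have a: "continuous_map (ctop X) (unit_top H) (cs X)"
        using c2[OF eK eH cX] unfolding local_homeo_def by (rule conjunct1)
      have b: "continuous_map T (ctop X) fst"
        unfolding T_def by (intro continuous_map_from_subtopology continuous_map_fst)
      from continuous_map_compose[OF b a] show ?thesis by (simp add: comp_def)
    qed
    have oN0: "openin T N0" unfolding N0_def by (rule openin_continuous_map_preimage[OF csc B(3)])
    define T0 where "T0 = subtopology T N0"
    have tsT0: "topspace T0 = N0" unfolding T0_def using openin_subset[OF oN0] by auto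
    define \<kappa> where "\<kappa> = (\<lambda>q::'x \<times> 'y. \<sigma> (cs X (fst q)))"
    have \<kappa>c: "continuous_map T0 (gtop H) \<kappa>"
    proof -
      have "continuous_map T0 (subtopology (unit_top H) (rng H ` B)) (\<lambda>q. cs X (fst q))"
        unfolding continuous_map_in_subtopology T0_def
        using continuous_map_from_subtopology[OF csc] N0_def by auto
      from continuous_map_compose[OF this \<sigma>c] show ?thesis
        unfolding \<kappa>_def continuous_map_in_subtopology by (simp add: comp_def)
    qed
    have \<kappa>N: "\<And>q. q \<in> N0 \<Longrightarrow> \<kappa> q \<in> arr H \<and> rng H (\<kappa> q) = cs X (fst q)"
      unfolding \<kappa>_def N0_def using \<sigma>B \<sigma>r BH by auto
    have N0fib: "\<And>q. q \<in> N0 \<Longrightarrow> q \<in> fib_prod X Y" unfolding N0_def topT by auto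
    have fstc: "continuous_map T0 (ctop X) fst"
      unfolding T0_def T_def by (intro continuous_map_from_subtopology continuous_map_fst)
    have sndc: "continuous_map T0 (ctop Y) snd"
      unfolding T0_def T_def by (intro continuous_map_from_subtopology continuous_map_snd)
    define \<Phi> where "\<Phi> = (\<lambda>q. ract X (fst q) (\<kappa> q))"
    define \<Psi> where "\<Psi> = (\<lambda>q. lact Y (ginv H (\<kappa> q)) (snd q))"
    have \<Phi>c: "continuous_map T0 (ctop X) \<Phi>"
    proof -
      have "continuous_map T0 (subtopology (prod_topology (ctop X) (gtop H))
          {(x, g). x \<in> pts X \<and> g \<in> arr H \<and> cs X x = rng H g}) (\<lambda>q. (fst q, \<kappa> q))"
        unfolding continuous_map_in_subtopology
        using fstc \<kappa>c \<kappa>N N0fib tsT0 by (auto intro!: continuous_map_pairedI simp: fib_prod_def)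
      from continuous_map_compose[OF this c10[OF eK eH cX]] show ?thesis
        unfolding \<Phi>_def by (simp add: comp_def)
    qed
    have \<Psi>c: "continuous_map T0 (ctop Y) \<Psi>"
    proof -
      have gc: "continuous_map (gtop H) (gtop H) (ginv H)" by (rule gr_inv_cont[OF eH])
      have "continuous_map T0 (subtopology (prod_topology (gtop H) (ctop Y))
          {(h, y). h \<in> arr H \<and> y \<in> pts Y \<and> src H h = cr Y y}) (\<lambda>q. (ginv H (\<kappa> q), snd q))"
        unfolding continuous_map_in_subtopology
        using sndc continuous_map_compose[OF \<kappa>c gc] \<kappa>N N0fib tsT0
        by (auto intro!: continuous_map_pairedI simp: fib_prod_def comp_def)
      from continuous_map_compose[OF this c6[OF eH eG cY]] show ?thesis
        unfolding \<Psi>_def by (simp add: comp_def)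
    qed
    define W where "W = {q \<in> topspace T0. \<Phi> q \<in> U} \<inter> {q \<in> topspace T0. \<Psi> q \<in> V}"
    have "openin T0 W" unfolding W_def
      by (intro openin_Int openin_continuous_map_preimage[OF \<Phi>c oU] openin_continuous_map_preimage[OF \<Psi>c oV])
    then have oW: "openin T W" using openin_trans_full oN0 T0_def by blast
    have pW: "p \<in> W"
    proof -
      have pN: "p \<in> N0" unfolding N0_def using p topT csx' B(2) by auto
      then have "\<kappa> p = h" unfolding \<kappa>_def using p csx' \<sigma>h by simp
      then show ?thesis unfolding W_def \<Phi>_def \<Psi>_def using pN tsT0 p hx hy xy by auto
    qed
    have WQ: "W \<subseteq> {p \<in> topspace T. f p \<in> S}"
    proof
      fix q assume qW: "q \<in> W"
      obtain a b where q: "q = (a, b)" by fastforce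
      have qN: "q \<in> N0" using qW tsT0 W_def by auto
      have fab: "(a, b) \<in> fib_prod X Y" using N0fib qN q by simp
      have ab: "a \<in> pts X" "b \<in> pts Y" "cs X a = cr Y b" using fab by (auto simp: fib_prod_def)
      define k where "k = \<kappa> q"
      have k: "k \<in> arr H" "rng H k = cs X a" using \<kappa>N[OF qN] q k_def by auto
      define x0 where "x0 = ract X a k"
      define y0 where "y0 = lact Y (ginv H k) b"
      have x0U: "x0 \<in> U" and y0V: "y0 \<in> V"
        using qW unfolding W_def \<Phi>_def \<Psi>_def x0_def y0_def k_def q by auto
      have f0: "(x0, y0) \<in> fib_prod X Y" unfolding fib_prod_def x0_def y0_def
        using ab k by auto
      have "x0 = ract X a k" by (simp add: x0_def)
      have e1: "ract X x0 (ginv H k) = a"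
        unfolding x0_def using co_ract_inv[OF eK eH cX, of k a] ab k by simp
      have e2: "lact Y k y0 = b"
        unfolding y0_def using co_lact_inv[OF eH eG cY, of "ginv H k" b] ab k by simp
      have "cs X x0 = src H k" unfolding x0_def using ab k by simp
      then have "(a, b) \<in> cls H X Y x0 y0" unfolding cls_def using e1 e2 k by force
      then have "cls H X Y a b = cls H X Y x0 y0" using cls_mem[OF eK eH eG cX cY f0] by blast
      moreover have "cls H X Y x0 y0 \<in> S" unfolding S_def slice_prod_def
        using x0U y0V f0 by (auto simp: fib_prod_def)
      ultimately show "q \<in> {p \<in> topspace T. f p \<in> S}" using q fab topT f_def by auto
    qed
    show "\<exists>W. openin T W \<and> p \<in> W \<and> W \<subseteq> {p \<in> topspace T. f p \<in> S}"
      using oW pW WQ by blast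
  qed
  then show ?thesis unfolding S_def[symmetric] ct topology_inverse'[OF istop_quot] using SS by simp
qed

end

lemma rep_facts:
  assumes eK: "etale_groupoid K" and eH: "etale_groupoid H" and eG: "etale_groupoid G"
    and cX: "is_corr K H X" and cY: "is_corr H G Y" and xy: "(x, y) \<in> fib_prod X Y"
  shows "(fst (rep (cls H X Y x y)), snd (rep (cls H X Y x y))) \<in> fib_prod X Y"
    "cls H X Y (fst (rep (cls H X Y x y))) (snd (rep (cls H X Y x y))) = cls H X Y x y"
    "cs Y (snd (rep (cls H X Y x y))) = cs Y y"
    "(fst (rep (cls H X Y x y)), snd (rep (cls H X Y x y))) \<in> cls H X Y x y"
  using cls_mem[OF eK eH eG cX cY xy, of "fst (rep (cls H X Y x y))" "snd (rep (cls H X Y x y))"]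
    rep_mem[OF eK eH eG cX cY xy] by auto

theorem lemma7p11:
  fixes K :: "'k grpd" and H :: "'h grpd" and G :: "'g grpd"
    and X :: "('x, 'k, 'h) corr" and Y :: "('y, 'h, 'g) corr"
    and U :: "'x set" and V :: "'y set"
  assumes "etale_groupoid K" and "etale_groupoid H" and "etale_groupoid G"
    and "is_corr K H X" and "is_corr H G Y"
    and "slice H X U" and "slice G Y V"
  shows "slice G (comp_corr H X Y) (slice_prod H X Y U V) \<and>
         (\<forall>z \<in> slice_prod H X Y U V. \<exists>!(x, y). x \<in> U \<and> y \<in> V \<and> cs X x = cr Y y \<and> z = cls H X Y x y)"
proof -
  note eK = assms(1) and eH = assms(2) and eG = assms(3) and cX = assms(4) and cY = assms(5)
  have oU: "openin (ctop X) U" and icU: "inj_on (cs X) U" and ioU: "inj_on (orbit_r H X) U"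
    using assms(6) unfolding slice_def by auto
  have oV: "openin (ctop Y) V" and icV: "inj_on (cs Y) V" and ioV: "inj_on (orbit_r G Y) V"
    using assms(7) unfolding slice_def by auto
  have UX: "U \<subseteq> pts X" using openin_subset[OF oU] unfolding pts_def by auto
  have VY: "V \<subseteq> pts Y" using openin_subset[OF oV] unfolding pts_def by auto
  define C where "C = comp_corr H X Y"
  define SP where "SP = slice_prod H X Y U V"
  have SPD: "\<And>z. z \<in> SP \<Longrightarrow> \<exists>x y. x \<in> U \<and> y \<in> V \<and> (x, y) \<in> fib_prod X Y \<and> z = cls H X Y x y"
    unfolding SP_def slice_prod_def fib_prod_def using UX VY by blast
  have csC: "\<And>z. cs C z = cs Y (snd (rep z))" unfolding C_def comp_corr_def by simp
  have ractC: "\<And>z g. ract C z g = cls H X Y (fst (rep z)) (ract Y (snd (rep z)) g)"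
    unfolding C_def comp_corr_def by simp
  have uniq: "\<And>x y x' y'. x \<in> U \<Longrightarrow> (x, y) \<in> fib_prod X Y \<Longrightarrow> x' \<in> U \<Longrightarrow> (x', y') \<in> fib_prod X Y
      \<Longrightarrow> cls H X Y x' y' = cls H X Y x y \<Longrightarrow> x' = x \<and> y' = y"
    using slice_uniq[OF eK eH eG cX cY ioU] by blast
  have A: "\<forall>z \<in> SP. \<exists>!(x, y). x \<in> U \<and> y \<in> V \<and> cs X x = cr Y y \<and> z = cls H X Y x y"
  proof
    fix z assume "z \<in> SP"
    then obtain x y where xy: "x \<in> U" "y \<in> V" "(x, y) \<in> fib_prod X Y" "z = cls H X Y x y"
      using SPD by blast
    show "\<exists>!(x, y). x \<in> U \<and> y \<in> V \<and> cs X x = cr Y y \<and> z = cls H X Y x y"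
    proof (rule ex1I[of _ "(x, y)"])
      show "case (x, y) of (x, y) \<Rightarrow> x \<in> U \<and> y \<in> V \<and> cs X x = cr Y y \<and> z = cls H X Y x y"
        using xy unfolding fib_prod_def by auto
    next
      fix p assume p: "case p of (x, y) \<Rightarrow> x \<in> U \<and> y \<in> V \<and> cs X x = cr Y y \<and> z = cls H X Y x y"
      obtain x' y' where pp: "p = (x', y')" by fastforce
      have "x' \<in> U" "(x', y') \<in> fib_prod X Y" "cls H X Y x' y' = cls H X Y x y"
        using p pp xy UX VY unfolding fib_prod_def by auto
      then show "p = (x, y)" using uniq[OF xy(1,3)] pp by blast
    qed
  qed
  have B: "inj_on (cs C) SP"
  proof (rule inj_onI)
    fix z1 z2 assume z1: "z1 \<in> SP" and z2: "z2 \<in> SP" and e: "cs C z1 = cs C z2"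
    obtain x1 y1 where xy1: "x1 \<in> U" "y1 \<in> V" "(x1, y1) \<in> fib_prod X Y" "z1 = cls H X Y x1 y1"
      using SPD z1 by blast
    obtain x2 y2 where xy2: "x2 \<in> U" "y2 \<in> V" "(x2, y2) \<in> fib_prod X Y" "z2 = cls H X Y x2 y2"
      using SPD z2 by blast
    have "cs Y y1 = cs Y y2" using e csC rep_facts(3)[OF eK eH eG cX cY xy1(3)]
      rep_facts(3)[OF eK eH eG cX cY xy2(3)] xy1(4) xy2(4) by simp
    then have yy: "y1 = y2" using icV xy1(2) xy2(2) by (meson inj_onD)
    then have "cs X x1 = cs X x2" using xy1(3) xy2(3) unfolding fib_prod_def by auto
    then have "x1 = x2" using icU xy1(1) xy2(1) by (meson inj_onD)
    then show "z1 = z2" using yy xy1(4) xy2(4) by simp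
  qed
  have Cc: "orbit_r G C z1 = orbit_r G C z2 \<Longrightarrow> z1 \<in> SP \<Longrightarrow> z2 \<in> SP \<Longrightarrow> z1 = z2" for z1 z2
  proof -
    assume e: "orbit_r G C z1 = orbit_r G C z2" and z1: "z1 \<in> SP" and z2: "z2 \<in> SP"
    obtain x1 y1 where xy1: "x1 \<in> U" "y1 \<in> V" "(x1, y1) \<in> fib_prod X Y" "z1 = cls H X Y x1 y1"
      using SPD z1 by blast
    obtain x2 y2 where xy2: "x2 \<in> U" "y2 \<in> V" "(x2, y2) \<in> fib_prod X Y" "z2 = cls H X Y x2 y2"
      using SPD z2 by blast
    have p1: "x1 \<in> pts X" "y1 \<in> pts Y" "cs X x1 = cr Y y1" using xy1(3) unfolding fib_prod_def by auto
    have p2: "x2 \<in> pts X" "y2 \<in> pts Y" "cs X x2 = cr Y y2" using xy2(3) unfolding fib_prod_def by auto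
    define a1 where "a1 = fst (rep z1)"
    define b1 where "b1 = snd (rep z1)"
    define a2 where "a2 = fst (rep z2)"
    define b2 where "b2 = snd (rep z2)"
    note r1 = rep_facts[OF eK eH eG cX cY xy1(3), folded xy1(4), folded a1_def b1_def]
    note r2 = rep_facts[OF eK eH eG cX cY xy2(3), folded xy2(4), folded a2_def b2_def]
    have b1p: "b1 \<in> pts Y" using r1(1) unfolding fib_prod_def by auto
    have "ract C z1 (cs Y b1) = z1"
      using ractC[of z1 "cs Y b1"] co_ract_unit[OF eH eG cY b1p] r1(2) a1_def b1_def by simp
    moreover have "cs Y b1 \<in> arr G" "rng G (cs Y b1) = cs C z1"
      using co_cs[OF eH eG cY b1p] csC b1_def by auto
    ultimately have "z1 \<in> orbit_r G C z1" unfolding orbit_r_def by force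
    then have "z1 \<in> orbit_r G C z2" using e by simp
    then obtain g where g: "g \<in> arr G" "rng G g = cs Y b2" "z1 = cls H X Y a2 (ract Y b2 g)"
      unfolding orbit_r_def using csC ractC a2_def b2_def by auto
    have b2p: "a2 \<in> pts X" "b2 \<in> pts Y" "cs X a2 = cr Y b2" using r2(1) unfolding fib_prod_def by auto
    have f2g: "(a2, ract Y b2 g) \<in> fib_prod X Y"
      using b2p g co_ract[OF eH eG cY, of b2 g] unfolding fib_prod_def by auto
    obtain h where h: "h \<in> arr H" "src H h = cs X a2" "x1 = ract X a2 (ginv H h)"
        "y1 = lact Y h (ract Y b2 g)"
      using cls_eq_imp[OF eK eH eG cX cY f2g xy1(3)] g(3) xy1(4) by metis
    obtain k where k: "k \<in> arr H" "src H k = cs X x2" "a2 = ract X x2 (ginv H k)" "b2 = lact Y k y2"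
      using r2(4) xy2(4) unfolding cls_def by auto
    note Hs = gr_basic[OF eH] gr_mult[OF eH] gr_unit[OF eH] gr_inv[OF eH] gr_inv_inv[OF eH]
    have csa2: "cs X a2 = rng H k" using k p2 co_ract[OF eK eH cX, of x2 "ginv H k"] Hs by simp
    have "orbit_r H X x1 = orbit_r H X a2"
      using co_orbit[OF eK eH cX, of a2 "ginv H h"] h b2p Hs by simp
    also have "\<dots> = orbit_r H X x2"
      using co_orbit[OF eK eH cX, of x2 "ginv H k"] k p2 Hs by simp
    finally have xx: "x1 = x2" using ioU xy1(1) xy2(1) by (meson inj_onD)
    have hk: "src H h = rng H k" using h csa2 by simp
    have "ract X x1 (mult H (ginv H k) (ginv H h)) = x1"
      using h k xx co_ract_assoc[OF eK eH cX, of x2 "ginv H k" "ginv H h"] p2 hk Hs by simp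
    then have "mult H (ginv H k) (ginv H h) = cs X x1"
      using co_free[OF eK eH cX, of x1 "mult H (ginv H k) (ginv H h)"] h k xx p2 hk Hs by simp
    then have "ginv H (mult H h k) = cs X x1" using gr_inv_mult[OF eH, of h k] h k hk by simp
    then have hku: "mult H h k = cs X x1"
      using gr_inv_inv[OF eH, of "mult H h k"] gr_inv_unit[OF eH, of "cs X x1"] h k hk
        co_cs[OF eK eH cX] p1 Hs by (metis gr_mult(1)[OF eH])
    have "y1 = lact Y h (lact Y k (ract Y y2 g))"
      using h(4) k(4) co_comm[OF eH eG cY, of k y2 g] k p2 g b2p by (simp add: co_lact[OF eH eG cY])
    also have "\<dots> = lact Y (mult H h k) (ract Y y2 g)"
      using co_lact_assoc[OF eH eG cY, of h k "ract Y y2 g"] h k hk p2 g b2p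
      by (simp add: co_lact[OF eH eG cY] co_ract[OF eH eG cY])
    also have "\<dots> = ract Y y2 g"
      using hku xx p2 g b2p k co_lact_unit[OF eH eG cY, of "ract Y y2 g"]
      by (simp add: co_lact[OF eH eG cY] co_ract[OF eH eG cY])
    finally have "y1 = ract Y y2 g" .
    moreover have "cs Y y2 = rng G g" using g b2p k p2 by (simp add: co_lact[OF eH eG cY])
    ultimately have "orbit_r G Y y1 = orbit_r G Y y2" using co_orbit[OF eH eG cY, of y2 g] p2 g by simp
    then have "y1 = y2" using ioV xy1(2) xy2(2) by (meson inj_onD)
    then show "z1 = z2" using xx xy1(4) xy2(4) by simp
  qed
  have "openin (ctop C) SP" unfolding C_def SP_def by (rule sp_open[OF eK eH eG cX cY oU oV])
  moreover have "inj_on (orbit_r G C) SP" using Cc by (meson inj_onI)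
  ultimately have "slice G C SP" unfolding slice_def using B by blast
  then show ?thesis using A unfolding C_def SP_def by simp
qed

end
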